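(* Let $0<\mu_1<1$, $\lambda_G>0$, set $\mu_2:=\lambda_G$ and $\mu_3:=\frac{\mu_1}{\mu_2(1+2\mu_1)}$, and let $p\ge1$ be an integer. Let $q\le p$ and let $(\mathbf s_i,\mathbf y_i)$, $i=1,\dots,q$, be vectors in $\mathbb{R}^d$ each of which is the output $(\tilde{\mathbf s},\tilde{\mathbf y})$ of the damping procedure $D_{P(I)}D_{LM}$ (with parameters $\mu_1,\mu_2$) applied to some input pair $(\mathbf s,\mathbf y)\neq(0,0)$. Define $H_0:=\lambda_G^{-1}I$ and recursively, with $\rho_i=(\mathbf s_i^\top\mathbf y_i)^{-1}$, $$H_i=(I-\rho_i\mathbf s_i\mathbf y_i^\top)H_{i-1}(I-\rho_i\mathbf y_i\mathbf s_i^\top)+\rho_i\mathbf s_i\mathbf s_i^\top,\quad i=1,\dots,q.$$ Then $\underline\kappa_G I\preceq H_q\preceq\bar\kappa_G I$, where $$\underline\kappa_G:=\Big(\lambda_G+\frac{p}{\mu_3}\Big)^{-1},\qquad \bar\kappa_G:=\lambda_G^{-1}\hat\mu^p+\frac{\hat\mu^p-1}{\hat\mu-1}\cdot\frac1{\mu_2},\qquad \hat\mu:=\Big(1+\frac1{\sqrt{\mu_2\mu_3}}\Big)^2.$$ In particular, the L-BFGS matrices $H_G^l(k)$ built (with memory at most $p$) from such damped pairs are uniformly bounded above and below by positive multiples of the identity, independently of the iteration $k$.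
   Context: $D_{P(I)}D_{LM}$ with parameters $0<\mu_1<1$, $\mu_2>0$ maps $(\mathbf s,\mathbf y)$ to $(\tilde{\mathbf s},\tilde{\mathbf y})$ as follows: $\theta_1:=\frac{(1-\mu_1)\mathbf y^\top\mathbf y/\mu_2}{\mathbf y^\top\mathbf y/\mu_2-\mathbf s^\top\mathbf y}$ if $\mathbf s^\top\mathbf y<\mu_1\mathbf y^\top\mathbf y/\mu_2$ and $\theta_1:=1$ otherwise; $\tilde{\mathbf s}:=\theta_1\mathbf s+(1-\theta_1)\mu_2^{-1}\mathbf y$; $\tilde{\mathbf y}:=\mathbf y+\mu_2\tilde{\mathbf s}$. $\preceq$ denotes the Loewner order on symmetric matrices. *)

theory Defs
  imports "HOL-Analysis.Analysis"
begin

definition loewner_le :: "real^'n^'n \<Rightarrow> real^'n^'n \<Rightarrow> bool" where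
  "loewner_le A B \<longleftrightarrow> (\<forall>x::real^'n. x \<bullet> (A *v x) \<le> x \<bullet> (B *v x))"

definition outer :: "real^'n \<Rightarrow> real^'n \<Rightarrow> real^'n^'n" where
  "outer u v = (\<chi> i j. u $ i * v $ j)"

definition damp_theta :: "real \<Rightarrow> real \<Rightarrow> real^'n \<Rightarrow> real^'n \<Rightarrow> real" where
  "damp_theta mu1 mu2 s y =
     (if s \<bullet> y < mu1 * (y \<bullet> y) / mu2
      then ((1 - mu1) * (y \<bullet> y) / mu2) / ((y \<bullet> y) / mu2 - s \<bullet> y)
      else 1)"

definition damp :: "real \<Rightarrow> real \<Rightarrow> real^'n \<Rightarrow> real^'n \<Rightarrow> (real^'n) \<times> (real^'n)" where
  "damp mu1 mu2 s y =
     (let th = damp_theta mu1 mu2 s y;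
          s' = th *\<^sub>R s + ((1 - th) / mu2) *\<^sub>R y
      in (s', y + mu2 *\<^sub>R s'))"

primrec lbfgs_H :: "real \<Rightarrow> (nat \<Rightarrow> real^'n) \<Rightarrow> (nat \<Rightarrow> real^'n) \<Rightarrow> nat \<Rightarrow> real^'n^'n" where
  "lbfgs_H lamG s y 0 = (1 / lamG) *\<^sub>R mat 1"
| "lbfgs_H lamG s y (Suc i) =
     (let rho = 1 / (s (Suc i) \<bullet> y (Suc i))
      in (mat 1 - rho *\<^sub>R outer (s (Suc i)) (y (Suc i))) ** lbfgs_H lamG s y i
           ** (mat 1 - rho *\<^sub>R outer (y (Suc i)) (s (Suc i)))
         + rho *\<^sub>R outer (s (Suc i)) (s (Suc i)))"

end

theory Submission
  imports Defs
begin

lemma outer_mv: "outer u v *v z = (v \<bullet> z) *\<^sub>R (u::real^'n)"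
  by (simp add: vec_eq_iff matrix_vector_mult_def outer_def inner_vec_def sum_distrib_left mult_ac)

lemma mv_add: "((A::real^'n^'n) + B) *v z = A *v z + B *v z"
  by (simp add: vec_eq_iff matrix_vector_mult_def algebra_simps sum.distrib)
lemma mv_diff: "((A::real^'n^'n) - B) *v z = A *v z - B *v z"
  by (simp add: vec_eq_iff matrix_vector_mult_def algebra_simps sum_subtractf)
lemma mv_scale: "(c *\<^sub>R (A::real^'n^'n)) *v z = c *\<^sub>R (A *v z)"
  by (simp add: vec_eq_iff matrix_vector_mult_def algebra_simps sum_distrib_left)

lemma H_quad:
  fixes s y :: "nat \<Rightarrow> real^'n" and i :: nat and rho :: real
  assumes rho_def: "rho = 1 / (s (Suc i) \<bullet> y (Suc i))"
  shows "x \<bullet> (lbfgs_H lamG s y (Suc i) *v x) =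
    (x - (rho * (s (Suc i) \<bullet> x)) *\<^sub>R y (Suc i)) \<bullet> (lbfgs_H lamG s y i *v (x - (rho * (s (Suc i) \<bullet> x)) *\<^sub>R y (Suc i)))
    + rho * (s (Suc i) \<bullet> x)^2"
proof -
  define S where "S = s (Suc i)" define Y where "Y = y (Suc i)" define H where "H = lbfgs_H lamG s y i"
  define w where "w = x - (rho * (S \<bullet> x)) *\<^sub>R Y"
  have "lbfgs_H lamG s y (Suc i) *v x = (mat 1 - rho *\<^sub>R outer S Y) *v (H *v w) + rho *\<^sub>R ((S \<bullet> x) *\<^sub>R S)"
    by (simp add: Let_def rho_def S_def Y_def H_def w_def mv_add mv_diff mv_scale outer_mv
        flip: matrix_vector_mul_assoc inner_commute)
  also have "\<dots> = H *v w - (rho * (Y \<bullet> (H *v w))) *\<^sub>R S + (rho * (S \<bullet> x)) *\<^sub>R S"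
    by (simp add: mv_diff mv_scale outer_mv)
  finally have "x \<bullet> (lbfgs_H lamG s y (Suc i) *v x) = x \<bullet> (H *v w) - rho * (Y \<bullet> (H *v w)) * (x \<bullet> S) + rho * (S \<bullet> x) * (x \<bullet> S)"
    by (simp add: inner_add_right inner_diff_right)
  also have "\<dots> = w \<bullet> (H *v w) + rho * (S \<bullet> x)^2"
    by (simp add: w_def inner_diff_left inner_commute power2_eq_square algebra_simps)
  finally show ?thesis by (simp add: w_def S_def Y_def H_def)
qed


lemma damp_props:
  fixes s0 y0 :: "real^'n"
  assumes "0 < mu1" "mu1 < 1" "0 < mu2" "(s0, y0) \<noteq> (0, 0)" "(sg, gm) = damp mu1 mu2 s0 y0"
  shows "sg \<noteq> 0 \<and> gm = y0 + mu2 *\<^sub>R sg \<and> mu1 * (y0 \<bullet> y0) \<le> mu2 * (sg \<bullet> y0)"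
proof -
  define th where "th = damp_theta mu1 mu2 s0 y0"
  have sg: "sg = th *\<^sub>R s0 + ((1 - th) / mu2) *\<^sub>R y0" and gm: "gm = y0 + mu2 *\<^sub>R sg"
    using assms(5) by (simp_all add: damp_def th_def Let_def)
  define a where "a = (y0 \<bullet> y0) / mu2"
  define b where "b = s0 \<bullet> y0"
  have a0: "a \<ge> 0" using assms(3) by (simp add: a_def)
  show ?thesis
  proof (cases "b < mu1 * a")
    case True
    have "y0 \<noteq> 0" using True a0 by (auto simp: a_def b_def)
    hence ap: "a > 0" using assms(3) by (simp add: a_def)
    have abp: "a - b > 0" using True ap assms(1,2) by (smt (verit) mult_left_le_one_le)
    have th: "th = (1 - mu1) * a / (a - b)"
      using True by (simp add: th_def damp_theta_def a_def b_def mult.assoc)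
    have "sg \<bullet> y0 = th * b + (1 - th) * a"
      using assms(3) by (simp add: sg inner_add_left a_def b_def)
    also have "\<dots> = a - th * (a - b)" by (simp add: algebra_simps)
    also have "th * (a - b) = (1 - mu1) * a" using abp by (simp add: th)
    hence "a - th * (a - b) = mu1 * a" by (simp add: algebra_simps)
    finally have e: "sg \<bullet> y0 = mu1 * a" by simp
    hence "sg \<noteq> 0" using ap assms(1) by auto
    moreover have "mu1 * (y0 \<bullet> y0) \<le> mu2 * (sg \<bullet> y0)" using e assms(3) by (simp add: a_def)
    ultimately show ?thesis using gm by simp
  next
    case False
    have th: "th = 1" using False by (simp add: th_def damp_theta_def a_def b_def mult.assoc)
    have sgs: "sg = s0" by (simp add: sg th)
    have le: "mu1 * (y0 \<bullet> y0) \<le> mu2 * (sg \<bullet> y0)"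
      using False assms(3) by (simp add: sgs a_def b_def field_simps)
    have "sg \<noteq> 0"
    proof
      assume "sg = 0"
      hence "y0 \<noteq> 0" using assms(4) sgs by auto
      hence "y0 \<bullet> y0 > 0" by simp
      hence "mu1 * (y0 \<bullet> y0) > 0" using assms(1) by simp
      thus False using le \<open>sg = 0\<close> by simp
    qed
    thus ?thesis using gm le by simp
  qed
qed

lemma pair_props:
  fixes sg v :: "real^'n"
  assumes "0 < mu1" "mu1 < 1" "0 < mu2" "sg \<noteq> 0" "mu1 * (v \<bullet> v) \<le> mu2 * (sg \<bullet> v)"
  shows "sg \<bullet> (v + mu2 *\<^sub>R sg) > 0"
    "mu1 * ((v + mu2 *\<^sub>R sg) \<bullet> (v + mu2 *\<^sub>R sg)) \<le> mu2 * (1 + 2*mu1) * (sg \<bullet> (v + mu2 *\<^sub>R sg))"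
    "mu2 * (sg \<bullet> sg) \<le> sg \<bullet> (v + mu2 *\<^sub>R sg)"
proof -
  have vv: "v \<bullet> v \<ge> 0" by simp
  have sv: "sg \<bullet> v \<ge> 0" using assms(1,3,5) vv
    by (smt (verit) mult_nonneg_nonneg zero_le_mult_iff)
  have ss: "sg \<bullet> sg > 0" using assms(4) by simp
  show "sg \<bullet> (v + mu2 *\<^sub>R sg) > 0" using sv ss assms(3) by (simp add: inner_add_right add_nonneg_pos)
  show "mu2 * (sg \<bullet> sg) \<le> sg \<bullet> (v + mu2 *\<^sub>R sg)" using sv by (simp add: inner_add_right)
  have e: "(v + mu2 *\<^sub>R sg) \<bullet> (v + mu2 *\<^sub>R sg) = v \<bullet> v + 2 * mu2 * (sg \<bullet> v) + mu2^2 * (sg \<bullet> sg)"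
    by (simp add: inner_add_left inner_add_right inner_commute power2_eq_square algebra_simps)
  have "mu1 * mu2^2 * (sg \<bullet> sg) \<le> mu2^2 * (1 + 2*mu1) * (sg \<bullet> sg)"
    using ss assms(1,2) by (intro mult_right_mono) (auto simp: algebra_simps)
  thus "mu1 * ((v + mu2 *\<^sub>R sg) \<bullet> (v + mu2 *\<^sub>R sg)) \<le> mu2 * (1 + 2*mu1) * (sg \<bullet> (v + mu2 *\<^sub>R sg))"
    using assms(5) assms(3) sv unfolding e
    by (simp add: inner_add_right algebra_simps power2_eq_square)
qed


lemma lower_scalar:
  fixes L rho g n c t ng :: real
  assumes "L > 0" "rho > 0" "g = ng^2" "ng \<ge> 0" "n \<ge> 0" "\<bar>c\<bar> \<le> ng * n"
  shows "n^2 / (L + rho * g) \<le> (n^2 - 2 * rho * t * c + rho^2 * t^2 * g) / L + rho * t^2"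
proof -
  define M where "M = L + rho * g"
  have "rho * g \<ge> 0" using assms by simp
  hence M: "M > 0" "M \<ge> L" using assms(1) by (auto simp: M_def)
  have "t * c \<le> \<bar>t * c\<bar>" by simp
  also have "\<dots> = \<bar>t\<bar> * \<bar>c\<bar>" by (simp add: abs_mult)
  also have "\<dots> \<le> \<bar>t\<bar> * (ng * n)" by (rule mult_left_mono) (use assms(6) in simp_all)
  finally have tc: "t * c \<le> \<bar>t\<bar> * (ng * n)" .
  have tcM: "t * c * M \<le> \<bar>t\<bar> * (ng * n) * M" using tc M by (simp add: mult_right_mono)
  have "rho * (g * n^2 - 2 * t * c * M + M^2 * t^2) \<ge> rho * (ng * n - M * \<bar>t\<bar>)^2"
  proof (rule mult_left_mono)
    have "(ng * n - M * \<bar>t\<bar>)^2 = g * n^2 - 2 * \<bar>t\<bar> * (ng * n) * M + M^2 * t^2"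
      by (simp add: assms(3) power2_eq_square algebra_simps)
    also have "\<dots> \<le> g * n^2 - 2 * t * c * M + M^2 * t^2"
      using tcM by linarith
    finally show "(ng * n - M * \<bar>t\<bar>)^2 \<le> g * n^2 - 2 * t * c * M + M^2 * t^2" .
  qed (use assms in simp)
  hence key: "0 \<le> rho * (g * n^2 - 2 * t * c * M + M^2 * t^2)"
    by (meson order_trans mult_nonneg_nonneg zero_le_power2 less_imp_le assms(2))
  have eq: "M * (n^2 - 2 * rho * t * c + rho^2 * t^2 * g) + rho * t^2 * L * M - L * n^2
      = rho * (g * n^2 - 2 * t * c * M + M^2 * t^2)"
    by (simp add: M_def power2_eq_square algebra_simps)
  have "L * n^2 \<le> M * (n^2 - 2 * rho * t * c + rho^2 * t^2 * g) + rho * t^2 * L * M"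
    using key eq by linarith
  moreover have "L * (((n^2 - 2 * rho * t * c + rho^2 * t^2 * g) / L + rho * t^2) * M)
     = M * (n^2 - 2 * rho * t * c + rho^2 * t^2 * g) + rho * t^2 * L * M"
    using assms(1) by (simp add: field_simps)
  ultimately have "n^2 \<le> ((n^2 - 2 * rho * t * c + rho^2 * t^2 * g) / L + rho * t^2) * M"
    using assms(1) by (metis mult_le_cancel_left_pos)
  thus ?thesis using M by (simp add: M_def[symmetric] pos_divide_le_eq)
qed


lemma lower_step:
  fixes x sg gm :: "real^'n" and H :: "real^'n^'n"
  assumes "L > 0" "rho > 0" "\<forall>z. (z \<bullet> z) / L \<le> z \<bullet> (H *v z)"
  shows "(x \<bullet> x) / (L + rho * (gm \<bullet> gm)) \<le>
    (x - (rho * (sg \<bullet> x)) *\<^sub>R gm) \<bullet> (H *v (x - (rho * (sg \<bullet> x)) *\<^sub>R gm)) + rho * (sg \<bullet> x)^2"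
proof -
  define w where "w = x - (rho * (sg \<bullet> x)) *\<^sub>R gm"
  define t where "t = sg \<bullet> x"
  have ww0: "w \<bullet> w = x \<bullet> x - 2 * rho * t * (gm \<bullet> x) + rho^2 * t^2 * (gm \<bullet> gm)"
    by (simp add: w_def t_def inner_diff_left inner_diff_right power2_eq_square algebra_simps inner_commute)
  have ww: "w \<bullet> w = (norm x)^2 - 2 * rho * t * (gm \<bullet> x) + rho^2 * t^2 * (norm gm)^2"
    unfolding ww0 power2_norm_eq_inner ..
  have "(norm x)^2 / (L + rho * (norm gm)^2) \<le> (w \<bullet> w) / L + rho * t^2"
    unfolding ww by (rule lower_scalar) (use assms(1,2) Cauchy_Schwarz_ineq2[of gm x] in auto)
  also have "\<dots> \<le> w \<bullet> (H *v w) + rho * t^2" using assms(3) by simp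
  finally show ?thesis by (simp add: w_def t_def power2_norm_eq_inner)
qed

lemma upper_step:
  fixes x sg gm :: "real^'n" and H :: "real^'n^'n"
  assumes "c \<ge> 0" "mu2 > 0" "mu3 > 0" "rho > 0" "rho * (sg \<bullet> sg) \<le> 1 / mu2"
    "rho * (gm \<bullet> gm) \<le> 1 / mu3" "\<forall>z. z \<bullet> (H *v z) \<le> c * (z \<bullet> z)"
  shows "(x - (rho * (sg \<bullet> x)) *\<^sub>R gm) \<bullet> (H *v (x - (rho * (sg \<bullet> x)) *\<^sub>R gm)) + rho * (sg \<bullet> x)^2
     \<le> ((1 + 1 / sqrt (mu2 * mu3))^2 * c + 1 / mu2) * (x \<bullet> x)"
proof -
  define w where "w = x - (rho * (sg \<bullet> x)) *\<^sub>R gm"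
  define t where "t = sg \<bullet> x"
  define k where "k = rho * norm sg * norm gm"
  define r where "r = 1 / sqrt (mu2 * mu3)"
  have k0: "k \<ge> 0" using assms(4) by (simp add: k_def)
  have "k^2 = (rho * (sg \<bullet> sg)) * (rho * (gm \<bullet> gm))"
    by (simp add: k_def power_mult_distrib flip: power2_norm_eq_inner) (simp add: power2_eq_square)
  also have "\<dots> \<le> (1 / mu2) * (1 / mu3)"
    using assms(2-6) by (intro mult_mono) auto
  finally have "k^2 \<le> 1 / (mu2 * mu3)" by simp
  hence "sqrt (k^2) \<le> sqrt (1 / (mu2 * mu3))" by (rule real_sqrt_le_mono)
  hence kr: "k \<le> r" using k0 by (simp add: r_def real_sqrt_divide)
  have tb: "\<bar>t\<bar> \<le> norm sg * norm x" unfolding t_def by (rule Cauchy_Schwarz_ineq2)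
  have "norm w \<le> norm x + norm ((rho * t) *\<^sub>R gm)" unfolding w_def t_def by (rule norm_triangle_ineq4)
  also have "norm ((rho * t) *\<^sub>R gm) = rho * \<bar>t\<bar> * norm gm" using assms(4) by (simp add: abs_mult)
  also have "rho * \<bar>t\<bar> * norm gm \<le> rho * (norm sg * norm x) * norm gm"
    using tb assms(4) by (intro mult_right_mono mult_left_mono) auto
  also have "rho * (norm sg * norm x) * norm gm = k * norm x" by (simp add: k_def)
  also have "k * norm x \<le> r * norm x" using kr by (simp add: mult_right_mono)
  finally have nw: "norm w \<le> (1 + r) * norm x" by (simp add: algebra_simps)
  have "w \<bullet> w = (norm w)^2" by (simp add: power2_norm_eq_inner)
  also have "\<dots> \<le> ((1 + r) * norm x)^2" using nw by (intro power_mono) auto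
  finally have ww: "w \<bullet> w \<le> (1 + r)^2 * (x \<bullet> x)" by (simp add: power_mult_distrib power2_norm_eq_inner)
  have "w \<bullet> (H *v w) \<le> c * (w \<bullet> w)" using assms(7) by simp
  also have "\<dots> \<le> c * ((1 + r)^2 * (x \<bullet> x))" using ww assms(1) by (rule mult_left_mono)
  finally have h1: "w \<bullet> (H *v w) \<le> (1 + r)^2 * c * (x \<bullet> x)" by (simp add: ac_simps)
  have "t^2 \<le> (norm sg * norm x)^2" using tb by (metis abs_ge_zero power2_abs power_mono)
  hence "rho * t^2 \<le> rho * ((sg \<bullet> sg) * (x \<bullet> x))" using assms(4)
    by (simp add: power_mult_distrib power2_norm_eq_inner)
  also have "\<dots> = (rho * (sg \<bullet> sg)) * (x \<bullet> x)" by simp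
  also have "\<dots> \<le> (1 / mu2) * (x \<bullet> x)" using assms(5) by (intro mult_right_mono) auto
  finally have h2: "rho * t^2 \<le> (1 / mu2) * (x \<bullet> x)" .
  show ?thesis using h1 h2 by (simp add: w_def t_def r_def algebra_simps)
qed

lemma sum_step: "(muh::real) * (\<Sum>j<i. muh^j) + 1 = (\<Sum>j<Suc i. muh^j)"
  by (induct i) (simp_all add: algebra_simps)


lemma ratio_le: "(a::real) > 0 \<Longrightarrow> m > 0 \<Longrightarrow> m * g \<le> K * a \<Longrightarrow> (1 / a) * g \<le> K / m"
  by (simp add: field_simps)

theorem lemma3:
  fixes mu1 lamG :: real and p q :: nat and s y :: "nat \<Rightarrow> real^'n"
  assumes "0 < mu1" and "mu1 < 1" and "0 < lamG" and "1 \<le> p" and "q \<le> p"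
    and "\<forall>i\<in>{1..q}. \<exists>s0 y0. (s0, y0) \<noteq> (0, 0) \<and> (s i, y i) = damp mu1 lamG s0 y0"
  shows "let mu2 = lamG;
             mu3 = mu1 / (mu2 * (1 + 2 * mu1));
             muh = (1 + 1 / sqrt (mu2 * mu3))^2;
             klow = 1 / (lamG + real p / mu3);
             kup = (1 / lamG) * muh ^ p + (muh ^ p - 1) / (muh - 1) * (1 / mu2)
         in loewner_le (klow *\<^sub>R mat 1) (lbfgs_H lamG s y q)
            \<and> loewner_le (lbfgs_H lamG s y q) (kup *\<^sub>R mat 1)"
proof -
  define mu3 where "mu3 = mu1 / (lamG * (1 + 2 * mu1))"
  define muh where "muh = (1 + 1 / sqrt (lamG * mu3))^2"
  define H where "H = lbfgs_H lamG s y"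
  have mu3p: "mu3 > 0" using assms(1,3) by (simp add: mu3_def)
  have muh1: "muh > 1"
  proof -
    have "1 / sqrt (lamG * mu3) > 0" using mu3p assms(3) by simp
    hence "1 < 1 + 1 / sqrt (lamG * mu3)" by simp
    thus ?thesis unfolding muh_def by (simp add: one_less_power)
  qed
  have pair: "s i \<bullet> y i > 0 \<and> (1 / (s i \<bullet> y i)) * (y i \<bullet> y i) \<le> 1 / mu3
      \<and> (1 / (s i \<bullet> y i)) * (s i \<bullet> s i) \<le> 1 / lamG" if "i \<in> {1..q}" for i
  proof -
    have ex: "\<exists>s0 y0. (s0, y0) \<noteq> (0, 0) \<and> (s i, y i) = damp mu1 lamG s0 y0"
      using assms(6) that by (rule bspec)
    obtain s0 y0 where sy0: "(s0, y0) \<noteq> (0, 0) \<and> (s i, y i) = damp mu1 lamG s0 y0"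
      using ex by (elim exE) (rule that)
    have sy: "(s0, y0) \<noteq> (0, 0)" "(s i, y i) = damp mu1 lamG s0 y0"
      using sy0 by (rule conjunct1, rule conjunct2)
    have d: "s i \<noteq> 0" "y i = y0 + lamG *\<^sub>R s i" "mu1 * (y0 \<bullet> y0) \<le> lamG * (s i \<bullet> y0)"
      using damp_props[OF assms(1,2,3) sy] by auto
    note pp = pair_props[OF assms(1,2,3) d(1) d(3), folded d(2)]
    have a: "s i \<bullet> y i > 0" by (rule pp(1))
    have b0: "(1 / (s i \<bullet> y i)) * (y i \<bullet> y i) \<le> (lamG * (1 + 2*mu1)) / mu1"
      by (rule ratio_le[OF a assms(1) pp(2)])
    have m3: "(lamG * (1 + 2*mu1)) / mu1 = 1 / mu3" by (simp add: mu3_def)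
    have b: "(1 / (s i \<bullet> y i)) * (y i \<bullet> y i) \<le> 1 / mu3" using b0 m3 by simp
    have c: "(1 / (s i \<bullet> y i)) * (s i \<bullet> s i) \<le> 1 / lamG"
      by (rule ratio_le[OF a assms(3), of _ 1]) (use pp(3) in simp)
    show ?thesis using a b c by blast
  qed
  have ind: "(\<forall>x. (x \<bullet> x) / (lamG + real i / mu3) \<le> x \<bullet> (H i *v x))
      \<and> (\<forall>x. x \<bullet> (H i *v x) \<le> (muh^i / lamG + (\<Sum>j<i. muh^j) / lamG) * (x \<bullet> x))"
    if "i \<le> q" for i
    using that
  proof (induction i)
    case 0
    have "x \<bullet> (H 0 *v x) = (x \<bullet> x) / lamG" for x by (simp add: H_def mv_scale)
    thus ?case by simp
  next
    case (Suc i)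
    hence IH: "\<forall>x. (x \<bullet> x) / (lamG + real i / mu3) \<le> x \<bullet> (H i *v x)"
      "\<forall>x. x \<bullet> (H i *v x) \<le> (muh^i / lamG + (\<Sum>j<i. muh^j) / lamG) * (x \<bullet> x)" by auto
    define rho where "rho = 1 / (s (Suc i) \<bullet> y (Suc i))"
    have P: "s (Suc i) \<bullet> y (Suc i) > 0" "rho * (y (Suc i) \<bullet> y (Suc i)) \<le> 1 / mu3"
      "rho * (s (Suc i) \<bullet> s (Suc i)) \<le> 1 / lamG"
      using pair[of "Suc i"] Suc.prems by (auto simp: rho_def)
    have rp: "rho > 0" using P(1) by (simp add: rho_def)
    have Lp: "lamG + real i / mu3 > 0" using assms(3) mu3p by (simp add: add_pos_nonneg)
    have Hq: "x \<bullet> (H (Suc i) *v x) =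
      (x - (rho * (s (Suc i) \<bullet> x)) *\<^sub>R y (Suc i)) \<bullet> (H i *v (x - (rho * (s (Suc i) \<bullet> x)) *\<^sub>R y (Suc i)))
      + rho * (s (Suc i) \<bullet> x)^2" for x
      unfolding H_def by (rule H_quad) (simp add: rho_def)
    have low: "(x \<bullet> x) / (lamG + real (Suc i) / mu3) \<le> x \<bullet> (H (Suc i) *v x)" for x
    proof -
      have d: "lamG + real i / mu3 + rho * (y (Suc i) \<bullet> y (Suc i)) \<le> lamG + real (Suc i) / mu3"
        using P(2) by (simp add: add_divide_distrib)
      have pos: "0 < lamG + real i / mu3 + rho * (y (Suc i) \<bullet> y (Suc i))"
        using Lp rp by (simp add: add_pos_nonneg)
      have "(x \<bullet> x) / (lamG + real (Suc i) / mu3) \<le> (x \<bullet> x) / (lamG + real i / mu3 + rho * (y (Suc i) \<bullet> y (Suc i)))"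
        by (rule divide_left_mono) (use d pos in auto)
      also have "\<dots> \<le> x \<bullet> (H (Suc i) *v x)"
        unfolding Hq by (rule lower_step[OF Lp rp IH(1)])
      finally show ?thesis .
    qed
    have c0: "muh^i / lamG + (\<Sum>j<i. muh^j) / lamG \<ge> 0"
      using muh1 assms(3) by (simp add: sum_nonneg)
    have up: "x \<bullet> (H (Suc i) *v x) \<le> (muh^(Suc i) / lamG + (\<Sum>j<Suc i. muh^j) / lamG) * (x \<bullet> x)" for x
    proof -
      have "x \<bullet> (H (Suc i) *v x) \<le> ((1 + 1 / sqrt (lamG * mu3))^2 * (muh^i / lamG + (\<Sum>j<i. muh^j) / lamG) + 1 / lamG) * (x \<bullet> x)"
        unfolding Hq by (rule upper_step[OF c0 assms(3) mu3p rp P(3) P(2) IH(2)])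
      also have "(1 + 1 / sqrt (lamG * mu3))^2 * (muh^i / lamG + (\<Sum>j<i. muh^j) / lamG) + 1 / lamG
          = muh^(Suc i) / lamG + (muh * (\<Sum>j<i. muh^j) + 1) / lamG"
        using assms(3) by (simp only: muh_def[symmetric]) (simp add: field_simps)
      also have "\<dots> = muh^(Suc i) / lamG + (\<Sum>j<Suc i. muh^j) / lamG"
        by (simp only: sum_step)
      finally show ?thesis .
    qed
    show ?case using low up by blast
  qed
  note indq = ind[OF order_refl]
  have klow: "loewner_le ((1 / (lamG + real p / mu3)) *\<^sub>R mat 1) (H q)"
    unfolding loewner_le_def
  proof
    fix x :: "real^'n"
    have "x \<bullet> (((1 / (lamG + real p / mu3)) *\<^sub>R mat 1) *v x) = (x \<bullet> x) / (lamG + real p / mu3)"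
      by (simp add: mv_scale)
    also have "\<dots> \<le> (x \<bullet> x) / (lamG + real q / mu3)"
      by (rule divide_left_mono) (use assms(3,5) mu3p in \<open>auto simp: divide_right_mono add_pos_nonneg\<close>)
    also have "\<dots> \<le> x \<bullet> (H q *v x)" using indq by blast
    finally show "x \<bullet> (((1 / (lamG + real p / mu3)) *\<^sub>R mat 1) *v x) \<le> x \<bullet> (H q *v x)" .
  qed
  have kup: "loewner_le (H q) (((1 / lamG) * muh ^ p + (muh ^ p - 1) / (muh - 1) * (1 / lamG)) *\<^sub>R mat 1)"
    unfolding loewner_le_def
  proof
    fix x :: "real^'n"
    have "muh^q \<le> muh^p" using muh1 assms(5) by (simp add: power_increasing)
    moreover have "(\<Sum>j<q. muh^j) \<le> (\<Sum>j<p. muh^j)"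
      using assms(5) muh1 by (intro sum_mono2) auto
    ultimately have "muh^q / lamG + (\<Sum>j<q. muh^j) / lamG \<le> muh^p / lamG + (\<Sum>j<p. muh^j) / lamG"
      using assms(3) by (intro add_mono divide_right_mono) auto
    also have "\<dots> = (1 / lamG) * muh ^ p + (muh ^ p - 1) / (muh - 1) * (1 / lamG)"
      using muh1 by (simp add: geometric_sum)
    finally have le: "muh^q / lamG + (\<Sum>j<q. muh^j) / lamG \<le> (1 / lamG) * muh ^ p + (muh ^ p - 1) / (muh - 1) * (1 / lamG)" .
    have "x \<bullet> (H q *v x) \<le> (muh^q / lamG + (\<Sum>j<q. muh^j) / lamG) * (x \<bullet> x)" using indq by blast
    also have "\<dots> \<le> ((1 / lamG) * muh ^ p + (muh ^ p - 1) / (muh - 1) * (1 / lamG)) * (x \<bullet> x)"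
      using le by (rule mult_right_mono) simp
    also have "\<dots> = x \<bullet> ((((1 / lamG) * muh ^ p + (muh ^ p - 1) / (muh - 1) * (1 / lamG)) *\<^sub>R mat 1) *v x)"
      by (simp add: mv_scale)
    finally show "x \<bullet> (H q *v x) \<le> x \<bullet> ((((1 / lamG) * muh ^ p + (muh ^ p - 1) / (muh - 1) * (1 / lamG)) *\<^sub>R mat 1) *v x)" .
  qed
  show ?thesis using klow kup unfolding Let_def mu3_def[symmetric] muh_def[symmetric] H_def by simp
qed

end
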